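(* Let $p$ be a prime and $G_0$ a finite centerless $p$-perfect group with $p$ dividing $|G_0|$. Let $\phi:\tilde G_p\to G_0$ be the universal $p$-Frattini cover of $G_0$, let $\ker_0=\ker(\phi)$ and let $\ker_1$ be the Frattini subgroup of $\ker_0$ (the closed subgroup generated by $p$-th powers and commutators of elements of $\ker_0$). Put $G_1=\tilde G_p/\ker_1$ and let $\phi_{1,0}:G_1\to G_0$ be the natural map. Let $P_0$ be a $p$-Sylow subgroup of $G_0$ and $G_0'=N_{G_0}(P_0)$ its normalizer. Then the extension $\phi_{1,0}^{-1}(G_0')\to G_0'$ (restriction of $\phi_{1,0}$) is not split.
   Context: A finite group is $p$-perfect if it has no $\mathbb{Z}/p$ quotient. The universal $p$-Frattini cover $\phi:\tilde G_p\to G_0$ is the (unique up to isomorphism) profinite cover of $G_0$ which is minimal among covers by $p$-projective profinite groups; its kernel is a pro-free pro-$p$ group contained in the Frattini subgroup of $\tilde G_p$, and it is versal for Frattini covers of $G_0$ with $p$-group kernel. In particular $G_1\to G_0$ is the universal Frattini cover of $G_0$ with elementary abelian $p$-group kernel. *)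

theory Defs
  imports "HOL-Algebra.Algebra" "HOL-Computational_Algebra.Primes"
begin

definition group_center :: "('a, 'm) monoid_scheme \<Rightarrow> 'a set" where
  "group_center G = {z \<in> carrier G. \<forall>g \<in> carrier G. z \<otimes>\<^bsub>G\<^esub> g = g \<otimes>\<^bsub>G\<^esub> z}"

definition centerless :: "('a, 'm) monoid_scheme \<Rightarrow> bool" where
  "centerless G \<longleftrightarrow> group_center G = {\<one>\<^bsub>G\<^esub>}"

definition p_perfect :: "nat \<Rightarrow> ('a, 'm) monoid_scheme \<Rightarrow> bool" where
  "p_perfect p G \<longleftrightarrow> epi G (integer_mod_group p) = {}"

definition maximal_subgroup :: "'a set \<Rightarrow> ('a, 'm) monoid_scheme \<Rightarrow> bool" where
  "maximal_subgroup M G \<longleftrightarrow> subgroup M G \<and> M \<noteq> carrier G \<and>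
     (\<forall>K. subgroup K G \<and> M \<subseteq> K \<longrightarrow> K = M \<or> K = carrier G)"

definition frattini_subgroup :: "('a, 'm) monoid_scheme \<Rightarrow> 'a set" where
  "frattini_subgroup G = carrier G \<inter> \<Inter> {M. maximal_subgroup M G}"

definition frattini_cover ::
  "('a, 'm) monoid_scheme \<Rightarrow> ('b, 'n) monoid_scheme \<Rightarrow> ('a \<Rightarrow> 'b) \<Rightarrow> bool" where
  "frattini_cover H G f \<longleftrightarrow> group H \<and> group G \<and> f \<in> epi H G \<and>
     kernel H G f \<subseteq> frattini_subgroup H"

definition elementary_abelian_p :: "nat \<Rightarrow> ('a, 'm) monoid_scheme \<Rightarrow> 'a set \<Rightarrow> bool" where
  "elementary_abelian_p p H K \<longleftrightarrow>
     (\<forall>x \<in> K. \<forall>y \<in> K. x \<otimes>\<^bsub>H\<^esub> y = y \<otimes>\<^bsub>H\<^esub> x) \<and>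
     (\<forall>x \<in> K. x [^]\<^bsub>H\<^esub> p = \<one>\<^bsub>H\<^esub>)"

definition elab_p_frattini_cover ::
  "nat \<Rightarrow> ('a, 'm) monoid_scheme \<Rightarrow> ('b, 'n) monoid_scheme \<Rightarrow> ('a \<Rightarrow> 'b) \<Rightarrow> bool" where
  "elab_p_frattini_cover p H G f \<longleftrightarrow>
     frattini_cover H G f \<and> elementary_abelian_p p H (kernel H G f)"

text \<open>The universal Frattini cover of G with elementary abelian p-kernel
  (i.e. G_1 -> G_0 = tilde G_p / ker_1 -> G_0): an elementary abelian p-Frattini cover
  through which every finite elementary abelian p-Frattini cover of G factors.
  Test covers are taken with carriers in nat, which loses no generality since every
  finite group is isomorphic to one with carrier a subset of nat.\<close>
definition universal_elab_p_frattini_cover ::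
  "nat \<Rightarrow> ('a, 'm) monoid_scheme \<Rightarrow> ('b, 'n) monoid_scheme \<Rightarrow> ('a \<Rightarrow> 'b) \<Rightarrow> bool" where
  "universal_elab_p_frattini_cover p H G f \<longleftrightarrow>
     elab_p_frattini_cover p H G f \<and>
     (\<forall>(H' :: nat monoid) f'. finite (carrier H') \<and> elab_p_frattini_cover p H' G f' \<longrightarrow>
        (\<exists>h \<in> hom H H'. \<forall>x \<in> carrier H. f' (h x) = f x))"

definition sylow_subgroup :: "nat \<Rightarrow> ('a, 'm) monoid_scheme \<Rightarrow> 'a set \<Rightarrow> bool" where
  "sylow_subgroup p G P \<longleftrightarrow> subgroup P G \<and> card P = p ^ multiplicity p (order G)"

end

theory Submission
  imports Defs "HOL-Algebra.Zassenhaus"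
begin



locale ext_setup = group G for G (structure) +
  fixes p :: nat and g
  assumes p_prime: "Factorial_Ring.prime p" and g_in: "g \<in> carrier G" and g_ne: "g \<noteq> \<one>"
    and g_p: "g [^] p = \<one>" and fin: "finite (carrier G)"
begin

definition C where "C = {g [^] (k::nat) | k. True}"
definition Om where "Om = rcosets C"
definition tr where "tr w = (SOME x. x \<in> w)"
definition cc where "cc w x = tr w \<otimes> x \<otimes> inv (tr (w #> x))"
definition th :: "'a \<Rightarrow> nat" where "th c = (LEAST k. g [^] k = c)"

lemma p_gt1: "p > 1" using p_prime prime_gt_1_nat by blast

lemma ord_g: "ord g = p"
proof -
  have "ord g dvd p" using g_p pow_eq_id g_in by blast
  moreover have "ord g \<noteq> 1" using ord_eq_1 g_in g_ne by blast
  ultimately show ?thesis using p_prime unfolding prime_nat_iff by auto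
qed

lemma pow_eq_mod: "g [^] (m::nat) = g [^] (n::nat) \<longleftrightarrow> m mod p = n mod p"
proof -
  have "g [^] (m::nat) = g [^] (n::nat) \<longleftrightarrow> int p dvd (int n - int m)"
    using int_pow_eq[OF g_in, of "int m" "int n"] ord_g by (simp add: int_pow_int)
  also have "\<dots> \<longleftrightarrow> int n mod int p = int m mod int p" by (simp add: mod_eq_dvd_iff)
  also have "\<dots> \<longleftrightarrow> n mod p = m mod p" by (simp flip: of_nat_mod)
  finally show ?thesis by auto
qed

lemma C_sub: "C \<subseteq> carrier G" using g_in by (auto simp: C_def)

lemma C_subgroup: "subgroup C G"
proof (rule subgroupI)
  show "C \<subseteq> carrier G" by (rule C_sub)
  show "C \<noteq> {}" by (auto simp: C_def)
  fix a assume "a \<in> C"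
  then obtain k where a: "a = g [^] (k::nat)" by (auto simp: C_def)
  have "g [^] (k * (p - 1)) \<otimes> a = g [^] (k * p)"
  proof -
    have e: "k * (p - 1) + k = k * p" using p_gt1 by (cases p) auto
    show ?thesis unfolding a using nat_pow_mult[OF g_in, of "k*(p-1)" k] e by simp
  qed
  also have "\<dots> = (g [^] p) [^] k" using g_in by (simp add: nat_pow_pow mult.commute)
  also have "\<dots> = \<one>" using g_p by simp
  finally have "inv a = g [^] (k * (p - 1))"
    using g_in a by (intro inv_equality) auto
  thus "inv a \<in> C" by (auto simp: C_def)
next
  fix a b assume "a \<in> C" "b \<in> C"
  then show "a \<otimes> b \<in> C" using g_in by (auto simp: C_def nat_pow_mult)
qed

lemma Om_closed: "w \<in> Om \<Longrightarrow> x \<in> carrier G \<Longrightarrow> w #> x \<in> Om"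
  unfolding Om_def RCOSETS_def using coset_mult_assoc C_sub by auto

lemma Om_sub: "w \<in> Om \<Longrightarrow> w \<subseteq> carrier G"
  unfolding Om_def RCOSETS_def using C_sub r_coset_subset_G by auto

lemma tr_in: assumes "w \<in> Om" shows "tr w \<in> w" "tr w \<in> carrier G" "w = C #> tr w"
proof -
  obtain a where a: "a \<in> carrier G" "w = C #> a" using assms unfolding Om_def RCOSETS_def by auto
  have "a \<in> w" using a rcos_self C_subgroup by auto
  thus 1: "tr w \<in> w" unfolding tr_def by (rule someI)
  thus 2: "tr w \<in> carrier G" using Om_sub assms by auto
  show "w = C #> tr w" using a 1 2 repr_independence C_subgroup by auto
qed

lemma Om_assoc: "w \<in> Om \<Longrightarrow> x \<in> carrier G \<Longrightarrow> y \<in> carrier G \<Longrightarrow> (w #> x) #> y = w #> (x \<otimes> y)"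
  using coset_mult_assoc Om_sub by blast

lemma Om_one: "w \<in> Om \<Longrightarrow> w #> \<one> = w"
  using Om_sub by auto

lemma Om_fin: "finite Om"
proof -
  have "Om \<subseteq> Pow (carrier G)" using Om_sub by auto
  thus ?thesis using fin finite_subset by blast
qed

lemma inv_cancel_right': "t \<in> carrier G \<Longrightarrow> z \<in> carrier G \<Longrightarrow> z \<otimes> t \<otimes> inv t = z"
  by (simp add: m_assoc)

lemma cc_in: assumes "w \<in> Om" "x \<in> carrier G" shows "cc w x \<in> C"
proof -
  have t: "tr w \<in> carrier G" "w = C #> tr w" using tr_in assms by auto
  have wx: "w #> x = C #> (tr w \<otimes> x)" using t assms coset_mult_assoc C_sub by metis
  define T where "T = tr (w #> x)"
  have "T \<in> C #> (tr w \<otimes> x)" using tr_in Om_closed assms wx unfolding T_def by metis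
  then obtain c where c: "c \<in> C" "T = c \<otimes> (tr w \<otimes> x)" unfolding r_coset_def by auto
  have cC: "c \<in> carrier G" using c C_sub by auto
  have "cc w x = tr w \<otimes> x \<otimes> inv (c \<otimes> (tr w \<otimes> x))" unfolding cc_def c(2)[unfolded T_def] by simp
  also have "\<dots> = inv c" using t cC assms by (simp add: inv_mult_group m_assoc[symmetric] inv_cancel_right')
  finally show ?thesis using c C_subgroup subgroup.m_inv_closed by fastforce
qed

lemma tr_carrier: "w \<in> Om \<Longrightarrow> tr w \<in> carrier G" using tr_in by auto

lemma inv_cancel_left': "t \<in> carrier G \<Longrightarrow> z \<in> carrier G \<Longrightarrow> inv t \<otimes> (t \<otimes> z) = z"
  by (simp add: m_assoc[symmetric])

lemma cc_mult: assumes "w \<in> Om" "x \<in> carrier G" "y \<in> carrier G"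
  shows "cc w (x \<otimes> y) = cc w x \<otimes> cc (w #> x) y"
proof -
  have a: "tr w \<in> carrier G" "tr (w #> x) \<in> carrier G" "tr (w #> (x \<otimes> y)) \<in> carrier G"
    using assms tr_carrier Om_closed by auto
  have "(w #> x) #> y = w #> (x \<otimes> y)" using Om_assoc assms by auto
  thus ?thesis unfolding cc_def using a assms by (simp add: m_assoc inv_cancel_left')
qed

lemma cc_one: "w \<in> Om \<Longrightarrow> cc w \<one> = \<one>"
  unfolding cc_def using Om_one tr_carrier by simp

lemma th_pow: "c \<in> C \<Longrightarrow> g [^] th c = c"
  unfolding th_def C_def by (auto intro: LeastI)

lemma th_mult: "c \<in> C \<Longrightarrow> d \<in> C \<Longrightarrow> th (c \<otimes> d) mod p = (th c + th d) mod p"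
proof -
  assume cd: "c \<in> C" "d \<in> C"
  have "c \<otimes> d \<in> C" by (rule subgroup.m_closed[OF C_subgroup cd(1) cd(2)])
  have "g [^] (th c + th d) = g [^] th c \<otimes> g [^] th d" using g_in by (simp add: nat_pow_mult)
  also have "\<dots> = c \<otimes> d" using th_pow cd by simp
  finally have "g [^] th (c \<otimes> d) = g [^] (th c + th d)" using th_pow[OF \<open>c \<otimes> d \<in> C\<close>] by simp
  thus ?thesis unfolding pow_eq_mod .
qed

lemma th_one: "th \<one> = 0"
  unfolding th_def by (rule Least_equality) auto

lemma C_in_Om: "C \<in> Om"
  unfolding Om_def using rcosetsI[OF C_sub one_closed] C_sub by simp

lemma g_in_C: "g \<in> C"
proof -
  have "g = g [^] (1::nat)" using g_in by simp
  thus ?thesis unfolding C_def by blast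
qed

lemma C_g: "C #> g = C"
  using subgroup.rcos_const[OF C_subgroup is_group g_in_C] .

lemma th_g: "th g mod p = 1"
proof -
  have "g [^] th g = g [^] (1::nat)" using th_pow g_in_C g_in by simp
  hence "th g mod p = 1 mod p" using pow_eq_mod by blast
  thus ?thesis using p_gt1 by simp
qed

lemma cc_C_g: "cc C g = g"
proof -
  have t: "tr C \<in> C" using tr_in C_in_Om by auto
  then obtain k where k: "tr C = g [^] (k::nat)" unfolding C_def by auto
  have comm: "tr C \<otimes> g = g \<otimes> tr C" unfolding k using g_in
    by (metis nat_pow_mult nat_pow_eone add.commute)
  have "cc C g = g \<otimes> tr C \<otimes> inv (tr C)" unfolding cc_def C_g comm ..
  thus ?thesis using t C_sub g_in by (simp add: m_assoc subsetD)
qed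

definition Mo :: int where "Mo = int p ^ 2"

definition Ecar :: "(('a set \<Rightarrow> int) \<times> 'a) set" where
  "Ecar = {(a,x). x \<in> carrier G \<and> (\<forall>w. w \<notin> Om \<longrightarrow> a w = 0) \<and>
     (\<forall>w\<in>Om. 0 \<le> a w \<and> a w < Mo \<and> a w mod int p = int (th (cc w x)) mod int p)}"

definition Emult where
  "Emult u v = (\<lambda>w. if w \<in> Om then (fst u w + fst v (w #> snd u)) mod Mo else 0, snd u \<otimes> snd v)"

definition E :: "(('a set \<Rightarrow> int) \<times> 'a) monoid" where
  "E = \<lparr>carrier = Ecar, monoid.mult = Emult, one = (\<lambda>w. 0, \<one>)\<rparr>"

lemma Emult_simp: "Emult (a,x) (b,y) = (\<lambda>w. if w \<in> Om then (a w + b (w #> x)) mod Mo else 0, x \<otimes> y)"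
  unfolding Emult_def fst_conv snd_conv ..

lemma Mo_pos: "Mo > 0" unfolding Mo_def using p_gt1 by simp
lemma p_dvd_Mo: "int p dvd Mo" unfolding Mo_def by (simp add: power2_eq_square)

lemma th_mult_int: "c \<in> C \<Longrightarrow> d \<in> C \<Longrightarrow>
   int (th (c \<otimes> d)) mod int p = (int (th c) + int (th d)) mod int p"
  using th_mult by (metis of_nat_add of_nat_mod)

lemma EcarI: "x \<in> carrier G \<Longrightarrow> (\<And>w. w \<notin> Om \<Longrightarrow> a w = 0) \<Longrightarrow>
   (\<And>w. w \<in> Om \<Longrightarrow> 0 \<le> a w \<and> a w < Mo \<and> a w mod int p = int (th (cc w x)) mod int p)
   \<Longrightarrow> (a, x) \<in> Ecar"
  unfolding Ecar_def by auto

lemma EcarD: "(a, x) \<in> Ecar \<Longrightarrow> x \<in> carrier G"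
   "(a, x) \<in> Ecar \<Longrightarrow> w \<notin> Om \<Longrightarrow> a w = 0"
   "(a, x) \<in> Ecar \<Longrightarrow> w \<in> Om \<Longrightarrow> 0 \<le> a w"
   "(a, x) \<in> Ecar \<Longrightarrow> w \<in> Om \<Longrightarrow> a w < Mo"
   "(a, x) \<in> Ecar \<Longrightarrow> w \<in> Om \<Longrightarrow> a w mod int p = int (th (cc w x)) mod int p"
  unfolding Ecar_def by auto

lemma Ecar_mult: assumes u: "(a,x) \<in> Ecar" and v: "(b,y) \<in> Ecar" shows "Emult (a,x) (b,y) \<in> Ecar"
proof -
  have x: "x \<in> carrier G" and y: "y \<in> carrier G" using EcarD u v by auto
  have "(\<lambda>w. if w \<in> Om then (a w + b (w #> x)) mod Mo else 0, x \<otimes> y) \<in> Ecar"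
  proof (rule EcarI)
    show "x \<otimes> y \<in> carrier G" using x y by simp
    fix w assume w: "w \<in> Om"
    have w': "w #> x \<in> Om" using Om_closed w x by auto
    have "((a w + b (w #> x)) mod Mo) mod int p = (a w + b (w #> x)) mod int p"
      using p_dvd_Mo by (simp add: mod_mod_cancel)
    also have "\<dots> = (a w mod int p + b (w #> x) mod int p) mod int p" by (simp add: mod_add_eq)
    also have "\<dots> = (int (th (cc w x)) mod int p + int (th (cc (w #> x) y)) mod int p) mod int p"
      using EcarD(5)[OF u w] EcarD(5)[OF v w'] by simp
    also have "\<dots> = (int (th (cc w x)) + int (th (cc (w #> x) y))) mod int p" by (simp add: mod_add_eq)
    also have "\<dots> = int (th (cc w (x \<otimes> y))) mod int p"
      using th_mult_int[OF cc_in[OF w x] cc_in[OF w' y]] cc_mult[OF w x y] by simp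
    finally show "0 \<le> (if w \<in> Om then (a w + b (w #> x)) mod Mo else 0) \<and>
      (if w \<in> Om then (a w + b (w #> x)) mod Mo else 0) < Mo \<and>
      (if w \<in> Om then (a w + b (w #> x)) mod Mo else 0) mod int p = int (th (cc w (x \<otimes> y))) mod int p"
      using w Mo_pos by simp
  qed simp
  thus ?thesis unfolding Emult_simp .
qed

lemma E_simps [simp]: "carrier E = Ecar" "monoid.mult E = Emult" "one E = (\<lambda>w. 0, \<one>)"
  unfolding E_def by simp_all

lemma one_Ecar: "(\<lambda>w. 0, \<one>) \<in> Ecar"
  by (rule EcarI) (auto simp: cc_one th_one Mo_pos)

lemma Emult_assoc: assumes "(a,x) \<in> Ecar" "(b,y) \<in> Ecar" "(d,z) \<in> Ecar"
  shows "Emult (Emult (a,x) (b,y)) (d,z) = Emult (a,x) (Emult (b,y) (d,z))"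
proof -
  have x: "x \<in> carrier G" and y: "y \<in> carrier G" and z: "z \<in> carrier G" using EcarD assms by auto
  have "(\<lambda>w. if w \<in> Om then ((if w \<in> Om then (a w + b (w #> x)) mod Mo else 0) + d (w #> (x \<otimes> y))) mod Mo else 0)
      = (\<lambda>w. if w \<in> Om then (a w + (if w #> x \<in> Om then (b (w #> x) + d ((w #> x) #> y)) mod Mo else 0)) mod Mo else 0)"
  proof
    fix w show "(if w \<in> Om then ((if w \<in> Om then (a w + b (w #> x)) mod Mo else 0) + d (w #> (x \<otimes> y))) mod Mo else 0)
      = (if w \<in> Om then (a w + (if w #> x \<in> Om then (b (w #> x) + d ((w #> x) #> y)) mod Mo else 0)) mod Mo else 0)"
    proof (cases "w \<in> Om")
      case True
      hence "w #> x \<in> Om" "(w #> x) #> y = w #> (x \<otimes> y)" using Om_closed Om_assoc x y by auto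
      thus ?thesis using True by (simp add: mod_add_left_eq mod_add_right_eq add.assoc)
    qed simp
  qed
  thus ?thesis unfolding Emult_simp by (simp add: m_assoc x y z)
qed

lemma Emult_one: assumes "(a,x) \<in> Ecar" shows "Emult (\<lambda>w. 0, \<one>) (a,x) = (a,x)"
proof -
  have x: "x \<in> carrier G" using EcarD assms by auto
  have "(\<lambda>w. if w \<in> Om then (0 + a (w #> \<one>)) mod Mo else 0) = a"
  proof
    fix w show "(if w \<in> Om then (0 + a (w #> \<one>)) mod Mo else 0) = a w"
      using EcarD(2)[OF assms, of w] EcarD(3)[OF assms, of w] EcarD(4)[OF assms, of w] Om_one[of w] by auto
  qed
  thus ?thesis unfolding Emult_simp using x by simp
qed

lemma dvd_arith: fixes a A B q :: int
  assumes "(A + B) mod q = 0" "a mod q = A mod q" shows "(- a) mod q = B mod q"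
proof -
  have "q dvd A + B" using assms(1) by auto
  moreover have "q dvd a - A" using assms(2) by (simp add: mod_eq_dvd_iff)
  ultimately have "q dvd - (a - A) - (A + B)" by (simp only: dvd_diff dvd_minus_iff)
  moreover have "- (a - A) - (A + B) = (- a) - B" by simp
  ultimately have "q dvd (- a) - B" by simp
  thus ?thesis by (simp add: mod_eq_dvd_iff)
qed

lemma Emult_inv: assumes u: "(a,x) \<in> Ecar"
  shows "(\<lambda>w. if w \<in> Om then (- a (w #> inv x)) mod Mo else 0, inv x) \<in> Ecar"
    "Emult (\<lambda>w. if w \<in> Om then (- a (w #> inv x)) mod Mo else 0, inv x) (a,x) = (\<lambda>w. 0, \<one>)"
proof -
  have x: "x \<in> carrier G" using EcarD assms by auto
  show "(\<lambda>w. if w \<in> Om then (- a (w #> inv x)) mod Mo else 0, inv x) \<in> Ecar"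
  proof (rule EcarI)
    fix w assume w: "w \<in> Om"
    define w' where "w' = w #> inv x"
    have w': "w' \<in> Om" "w' #> x = w" using Om_closed Om_assoc w x Om_one unfolding w'_def by auto
    have "cc w' \<one> = cc w' x \<otimes> cc w (inv x)" using cc_mult[OF w'(1) x inv_closed[OF x]] w' x by simp
    hence "int (th \<one>) mod int p = (int (th (cc w' x)) + int (th (cc w (inv x)))) mod int p"
      using cc_one[OF w'(1)] th_mult_int[OF cc_in[OF w'(1) x] cc_in[OF w inv_closed[OF x]]] by simp
    hence h: "(int (th (cc w' x)) + int (th (cc w (inv x)))) mod int p = 0" using th_one by simp
    have "(- a w') mod int p = int (th (cc w (inv x))) mod int p"
      using dvd_arith[OF h EcarD(5)[OF u w'(1)]] .
    moreover have "((- a w') mod Mo) mod int p = (- a w') mod int p"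
      using p_dvd_Mo by (simp add: mod_mod_cancel)
    ultimately show "0 \<le> (if w \<in> Om then (- a (w #> inv x)) mod Mo else 0) \<and>
       (if w \<in> Om then (- a (w #> inv x)) mod Mo else 0) < Mo \<and>
       (if w \<in> Om then (- a (w #> inv x)) mod Mo else 0) mod int p = int (th (cc w (inv x))) mod int p"
      using w Mo_pos unfolding w'_def by simp
  qed (use x in auto)
  have "(\<lambda>w. if w \<in> Om then ((if w \<in> Om then (- a (w #> inv x)) mod Mo else 0) + a (w #> inv x)) mod Mo else 0) = (\<lambda>w. 0)"
  proof
    fix w show "(if w \<in> Om then ((if w \<in> Om then (- a (w #> inv x)) mod Mo else 0) + a (w #> inv x)) mod Mo else 0) = 0"
      by (simp add: mod_add_left_eq)
  qed
  thus "Emult (\<lambda>w. if w \<in> Om then (- a (w #> inv x)) mod Mo else 0, inv x) (a,x) = (\<lambda>w. 0, \<one>)"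
    unfolding Emult_simp using x by simp
qed

lemma E_group: "group E"
proof (rule groupI)
  fix u v assume "u \<in> carrier E" "v \<in> carrier E"
  thus "u \<otimes>\<^bsub>E\<^esub> v \<in> carrier E" using Ecar_mult by (cases u, cases v) auto
next
  show "\<one>\<^bsub>E\<^esub> \<in> carrier E" using one_Ecar by simp
next
  fix u v z assume "u \<in> carrier E" "v \<in> carrier E" "z \<in> carrier E"
  thus "u \<otimes>\<^bsub>E\<^esub> v \<otimes>\<^bsub>E\<^esub> z = u \<otimes>\<^bsub>E\<^esub> (v \<otimes>\<^bsub>E\<^esub> z)"
    using Emult_assoc by (cases u, cases v, cases z) auto
next
  fix u assume "u \<in> carrier E"
  thus "\<one>\<^bsub>E\<^esub> \<otimes>\<^bsub>E\<^esub> u = u" using Emult_one by (cases u) auto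
next
  fix u assume "u \<in> carrier E"
  thus "\<exists>v\<in>carrier E. v \<otimes>\<^bsub>E\<^esub> u = \<one>\<^bsub>E\<^esub>" using Emult_inv by (cases u) force
qed

lemma E_finite: "finite (carrier E)"
proof -
  let ?F = "(\<lambda>(f,x). (\<lambda>w. if w \<in> Om then f w else 0, x)) ` ((Om \<rightarrow>\<^sub>E {0..<Mo}) \<times> carrier G)"
  have "finite ?F" using Om_fin fin by (intro finite_imageI finite_cartesian_product finite_PiE) auto
  moreover have "Ecar \<subseteq> ?F"
  proof
    fix u assume u: "u \<in> Ecar"
    obtain a x where ax: "u = (a,x)" by (cases u)
    have "(restrict a Om, x) \<in> (Om \<rightarrow>\<^sub>E {0..<Mo}) \<times> carrier G"
      using EcarD[of a x] u ax by auto
    moreover have "a = (\<lambda>w. if w \<in> Om then restrict a Om w else 0)"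
      using EcarD(2)[of a x] u ax by auto
    ultimately show "u \<in> ?F" unfolding ax by force
  qed
  ultimately show ?thesis using finite_subset by auto
qed

lemma snd_hom: "snd \<in> hom E G"
  unfolding hom_def using EcarD(1) by (auto simp: Emult_def)

lemma snd_surj: "snd ` carrier E = carrier G"
proof
  show "snd ` carrier E \<subseteq> carrier G" using EcarD(1) by auto
next
  show "carrier G \<subseteq> snd ` carrier E"
  proof
    fix x assume x: "x \<in> carrier G"
    have "(\<lambda>w. if w \<in> Om then int (th (cc w x)) mod int p else 0, x) \<in> Ecar"
    proof (rule EcarI)
      fix w assume "w \<in> Om"
      moreover have "int p \<le> Mo" unfolding Mo_def using p_gt1 by (simp add: power2_eq_square)
      moreover have "int (th (cc w x)) mod int p < int p" using p_gt1 by simp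
      moreover have "0 \<le> int (th (cc w x)) mod int p" using p_gt1 by simp
      ultimately show "0 \<le> (if w \<in> Om then int (th (cc w x)) mod int p else 0) \<and>
        (if w \<in> Om then int (th (cc w x)) mod int p else 0) < Mo \<and>
        (if w \<in> Om then int (th (cc w x)) mod int p else 0) mod int p = int (th (cc w x)) mod int p"
        by simp
    qed (use x in auto)
    thus "x \<in> snd ` carrier E" by force
  qed
qed

lemma kernel_pow: assumes u: "(a, \<one>) \<in> Ecar"
  shows "(a, \<one>) [^]\<^bsub>E\<^esub> n = (\<lambda>w. if w \<in> Om then (int n * a w) mod Mo else 0, \<one>)"
proof (induction n)
  case 0
  show ?case by (auto simp: fun_eq_iff)
next
  case (Suc n)
  have "(\<lambda>w. if w \<in> Om then ((if w \<in> Om then (int n * a w) mod Mo else 0) + a (w #> \<one>)) mod Mo else 0)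
     = (\<lambda>w. if w \<in> Om then (int (Suc n) * a w) mod Mo else 0)"
  proof
    fix w show "(if w \<in> Om then ((if w \<in> Om then (int n * a w) mod Mo else 0) + a (w #> \<one>)) mod Mo else 0)
     = (if w \<in> Om then (int (Suc n) * a w) mod Mo else 0)"
      using Om_one[of w] by (simp add: mod_add_left_eq mod_add_right_eq algebra_simps)
  qed
  thus ?case using Suc by (simp add: Emult_simp)
qed

lemma kernel_p: assumes u: "(a, \<one>) \<in> Ecar" shows "(a, \<one>) [^]\<^bsub>E\<^esub> p = \<one>\<^bsub>E\<^esub>"
proof -
  have "(\<lambda>w. if w \<in> Om then (int p * a w) mod Mo else 0) = (\<lambda>w. 0)"
  proof
    fix w show "(if w \<in> Om then (int p * a w) mod Mo else 0) = 0"
    proof (cases "w \<in> Om")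
      case True
      have "a w mod int p = 0" using EcarD(5)[OF u True] cc_one[OF True] th_one by simp
      then obtain k where "a w = int p * k" by auto
      hence "int p * a w = Mo * k" unfolding Mo_def by (simp add: power2_eq_square)
      thus ?thesis using True by simp
    qed simp
  qed
  thus ?thesis using kernel_pow[OF u] by simp
qed

lemma kernel_comm: assumes "(a, \<one>) \<in> Ecar" "(b, \<one>) \<in> Ecar"
  shows "(a, \<one>) \<otimes>\<^bsub>E\<^esub> (b, \<one>) = (b, \<one>) \<otimes>\<^bsub>E\<^esub> (a, \<one>)"
proof -
  have "(\<lambda>w. if w \<in> Om then (a w + b (w #> \<one>)) mod Mo else 0) = (\<lambda>w. if w \<in> Om then (b w + a (w #> \<one>)) mod Mo else 0)"
  proof
    fix w show "(if w \<in> Om then (a w + b (w #> \<one>)) mod Mo else 0) = (if w \<in> Om then (b w + a (w #> \<one>)) mod Mo else 0)"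
      using Om_one[of w] by (simp add: add.commute)
  qed
  thus ?thesis by (simp add: Emult_simp)
qed

lemma lift_pow: assumes y: "(a, g) \<in> Ecar"
  shows "fst ((a, g) [^]\<^bsub>E\<^esub> n) C = (int n * a C) mod Mo \<and> snd ((a, g) [^]\<^bsub>E\<^esub> n) = g [^] n"
proof (induction n)
  case 0
  show ?case by simp
next
  case (Suc n)
  obtain b z where bz: "(a, g) [^]\<^bsub>E\<^esub> n = (b, z)" by (cases "(a, g) [^]\<^bsub>E\<^esub> n")
  have gn: "g [^] n \<in> C" unfolding C_def by auto
  have "C #> g [^] n = C" using subgroup.rcos_const[OF C_subgroup is_group gn] .
  hence "fst ((a, g) [^]\<^bsub>E\<^esub> Suc n) C = ((int n * a C) mod Mo + a C) mod Mo"
    using Suc bz C_in_Om by (simp add: Emult_simp)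
  also have "\<dots> = (int (Suc n) * a C) mod Mo" by (simp add: mod_add_left_eq mod_add_right_eq algebra_simps)
  finally have f: "fst ((a, g) [^]\<^bsub>E\<^esub> Suc n) C = (int (Suc n) * a C) mod Mo" .
  have "snd ((a, g) [^]\<^bsub>E\<^esub> Suc n) = g [^] n \<otimes> g" using Suc bz by (simp add: Emult_simp)
  thus ?case using f by simp
qed

lemma lift_not_p: assumes y: "(a, g) \<in> Ecar" shows "(a, g) [^]\<^bsub>E\<^esub> p \<noteq> \<one>\<^bsub>E\<^esub>"
proof
  assume "(a, g) [^]\<^bsub>E\<^esub> p = \<one>\<^bsub>E\<^esub>"
  hence "(int p * a C) mod Mo = 0" using lift_pow[OF y, of p] by simp
  then obtain k where "int p * a C = Mo * k" by auto
  hence "int p * a C = int p * (int p * k)" unfolding Mo_def by (simp add: power2_eq_square)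
  hence "a C = int p * k" using p_gt1 by simp
  hence "a C mod int p = 0" by simp
  moreover have "a C mod int p = int (th g) mod int p" using EcarD(5)[OF y C_in_Om] cc_C_g by simp
  moreover have "int (th g) mod int p = 1" using th_g by (metis of_nat_mod of_nat_1)
  ultimately show False by simp
qed

end



lemma ext_exists:
  fixes G :: "('a, 'm) monoid_scheme" and p :: nat
  assumes "group G" "finite (carrier G)" "Factorial_Ring.prime p" "g \<in> carrier G" "g \<noteq> \<one>\<^bsub>G\<^esub>"
    "g [^]\<^bsub>G\<^esub> p = \<one>\<^bsub>G\<^esub>"
  shows "\<exists>(E :: (('a set \<Rightarrow> int) \<times> 'a) monoid) \<pi>. group E \<and> finite (carrier E) \<and> \<pi> \<in> hom E G \<and>
     \<pi> ` carrier E = carrier G \<and>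
     (\<forall>x\<in>carrier E. \<forall>y\<in>carrier E. \<pi> x = \<one>\<^bsub>G\<^esub> \<longrightarrow> \<pi> y = \<one>\<^bsub>G\<^esub> \<longrightarrow> x \<otimes>\<^bsub>E\<^esub> y = y \<otimes>\<^bsub>E\<^esub> x) \<and>
     (\<forall>x\<in>carrier E. \<pi> x = \<one>\<^bsub>G\<^esub> \<longrightarrow> x [^]\<^bsub>E\<^esub> p = \<one>\<^bsub>E\<^esub>) \<and>
     (\<forall>y\<in>carrier E. \<pi> y = g \<longrightarrow> y [^]\<^bsub>E\<^esub> p \<noteq> \<one>\<^bsub>E\<^esub>)"
proof -
  interpret X: ext_setup G p g using assms unfolding ext_setup_def ext_setup_axioms_def by blast
  show ?thesis
  proof (intro exI conjI ballI impI)
    show "group X.E" by (rule X.E_group)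
    show "finite (carrier X.E)" by (rule X.E_finite)
    show "snd \<in> hom X.E G" by (rule X.snd_hom)
    show "snd ` carrier X.E = carrier G" by (rule X.snd_surj)
    fix x y assume "x \<in> carrier X.E" "y \<in> carrier X.E" "snd x = \<one>\<^bsub>G\<^esub>" "snd y = \<one>\<^bsub>G\<^esub>"
    thus "x \<otimes>\<^bsub>X.E\<^esub> y = y \<otimes>\<^bsub>X.E\<^esub> x" using X.kernel_comm by (cases x, cases y) auto
  next
    fix x assume "x \<in> carrier X.E" "snd x = \<one>\<^bsub>G\<^esub>"
    thus "x [^]\<^bsub>X.E\<^esub> p = \<one>\<^bsub>X.E\<^esub>" using X.kernel_p by (cases x) auto
  next
    fix y assume "y \<in> carrier X.E" "snd y = g"
    thus "y [^]\<^bsub>X.E\<^esub> p \<noteq> \<one>\<^bsub>X.E\<^esub>" using X.lift_not_p by (cases y) auto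
  qed
qed

lemma nat_copy:
  fixes E :: "('e, 'z) monoid_scheme"
  assumes "group E" "finite (carrier E)"
  shows "\<exists>(H :: nat monoid) f. group H \<and> f \<in> iso H E"
proof -
  interpret E: group E by fact
  obtain n and e :: "nat \<Rightarrow> 'e" where ne: "carrier E = e ` {i. i < n}" "inj_on e {i. i < n}"
    using finite_imp_nat_seg_image_inj_on[OF assms(2)] by blast
  define I where "I = {i::nat. i < n}"
  define r where "r = inv_into I e"
  define H :: "nat monoid" where "H = \<lparr>carrier = I, monoid.mult = (\<lambda>i j. r (e i \<otimes>\<^bsub>E\<^esub> e j)), one = r \<one>\<^bsub>E\<^esub>\<rparr>"
  have er: "\<And>z. z \<in> carrier E \<Longrightarrow> e (r z) = z" unfolding r_def using ne I_def by (simp add: f_inv_into_f)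
  have rI: "\<And>z. z \<in> carrier E \<Longrightarrow> r z \<in> I" unfolding r_def by (rule inv_into_into) (use ne I_def in simp)
  have eC: "\<And>i. i \<in> I \<Longrightarrow> e i \<in> carrier E" using ne I_def by auto
  have inj: "\<And>i j. i \<in> I \<Longrightarrow> j \<in> I \<Longrightarrow> e i = e j \<Longrightarrow> i = j" using ne I_def by (auto dest: inj_onD)
  have Hc [simp]: "carrier H = I" unfolding H_def by simp
  have em: "\<And>i j. i \<in> I \<Longrightarrow> j \<in> I \<Longrightarrow> e (i \<otimes>\<^bsub>H\<^esub> j) = e i \<otimes>\<^bsub>E\<^esub> e j"
    unfolding H_def using er eC by simp
  have mI: "\<And>i j. i \<in> I \<Longrightarrow> j \<in> I \<Longrightarrow> i \<otimes>\<^bsub>H\<^esub> j \<in> I" unfolding H_def using rI eC by simp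
  have e1: "e \<one>\<^bsub>H\<^esub> = \<one>\<^bsub>E\<^esub>" unfolding H_def using er by simp
  have oI: "\<one>\<^bsub>H\<^esub> \<in> I" unfolding H_def using rI by simp
  have gH: "group H"
  proof (rule groupI)
    fix x y assume "x \<in> carrier H" "y \<in> carrier H" thus "x \<otimes>\<^bsub>H\<^esub> y \<in> carrier H" using mI by simp
  next
    show "\<one>\<^bsub>H\<^esub> \<in> carrier H" using oI by simp
  next
    fix x y z assume a: "x \<in> carrier H" "y \<in> carrier H" "z \<in> carrier H"
    show "x \<otimes>\<^bsub>H\<^esub> y \<otimes>\<^bsub>H\<^esub> z = x \<otimes>\<^bsub>H\<^esub> (y \<otimes>\<^bsub>H\<^esub> z)"
      using a by (intro inj) (auto simp: mI em eC E.m_assoc)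
  next
    fix x assume a: "x \<in> carrier H"
    show "\<one>\<^bsub>H\<^esub> \<otimes>\<^bsub>H\<^esub> x = x" using a by (intro inj) (auto simp: mI em eC e1 oI)
  next
    fix x assume a: "x \<in> carrier H"
    have "r (inv\<^bsub>E\<^esub> (e x)) \<in> I" using a eC rI by simp
    moreover have "r (inv\<^bsub>E\<^esub> (e x)) \<otimes>\<^bsub>H\<^esub> x = \<one>\<^bsub>H\<^esub>"
      using a eC rI er by (intro inj) (auto simp: mI em e1 oI)
    ultimately show "\<exists>y\<in>carrier H. y \<otimes>\<^bsub>H\<^esub> x = \<one>\<^bsub>H\<^esub>" by auto
  qed
  have "e \<in> iso H E"
    unfolding iso_def hom_def bij_betw_def using ne I_def em eC by auto
  thus ?thesis using gH by blast
qed




lemma pow_restrict: "x [^]\<^bsub>G\<lparr>carrier := H\<rparr>\<^esub> (n::nat) = x [^]\<^bsub>G\<^esub> n"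
  by (simp add: nat_pow_def)

lemma min_supp_frattini:
  fixes H :: "('h,'z) monoid_scheme" and G :: "('a,'m) monoid_scheme"
  assumes gH: "group H" and gG: "group G" and fin: "finite (carrier H)" and q: "q \<in> hom H G"
    and S: "subgroup S H" and qS: "q ` S = carrier G"
    and min: "\<And>T. subgroup T H \<Longrightarrow> q ` T = carrier G \<Longrightarrow> card S \<le> card T"
  shows "kernel (H\<lparr>carrier := S\<rparr>) G q \<subseteq> frattini_subgroup (H\<lparr>carrier := S\<rparr>)"
proof
  interpret H: group H by fact
  interpret G: group G by fact
  interpret q: group_hom H G q using q unfolding group_hom_def group_hom_axioms_def using gH gG by auto
  have SsubH: "S \<subseteq> carrier H" using S subgroup.subset by blast
  fix k assume "k \<in> kernel (H\<lparr>carrier := S\<rparr>) G q"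
  hence k: "k \<in> S" "q k = \<one>\<^bsub>G\<^esub>" unfolding kernel_def by auto
  have "k \<in> M" if Mmax: "maximal_subgroup M (H\<lparr>carrier := S\<rparr>)" for M
  proof (rule ccontr)
    assume kM: "k \<notin> M"
    have MS': "subgroup M (H\<lparr>carrier := S\<rparr>)" and MneS: "M \<noteq> S"
      and Mmx: "\<And>K. subgroup K (H\<lparr>carrier := S\<rparr>) \<Longrightarrow> M \<subseteq> K \<Longrightarrow> K = M \<or> K = S"
      using Mmax unfolding maximal_subgroup_def by auto
    have MH: "subgroup M H" using H.incl_subgroup[OF S MS'] .
    have MsubS: "M \<subseteq> S" using subgroup.subset[OF MS'] by simp
    have MsubH: "M \<subseteq> carrier H" using MsubS SsubH by auto
    define M' where "M' = {s \<in> S. q s \<in> q ` M}"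
    have M'H: "subgroup M' H"
    proof (rule H.subgroupI)
      show "M' \<subseteq> carrier H" unfolding M'_def using SsubH by auto
      show "M' \<noteq> {}" unfolding M'_def using subgroup.one_closed[OF S] subgroup.one_closed[OF MH] by auto
    next
      fix a assume "a \<in> M'"
      then obtain m where a: "a \<in> S" "m \<in> M" "q a = q m" unfolding M'_def by auto
      have aH: "a \<in> carrier H" and mH: "m \<in> carrier H" using a SsubH MsubH by auto
      have "inv\<^bsub>H\<^esub> a \<in> S" using subgroup.m_inv_closed[OF S a(1)] .
      moreover have "q (inv\<^bsub>H\<^esub> a) = q (inv\<^bsub>H\<^esub> m)" using aH mH a(3) by simp
      moreover have "inv\<^bsub>H\<^esub> m \<in> M" using subgroup.m_inv_closed[OF MH a(2)] .
      ultimately show "inv\<^bsub>H\<^esub> a \<in> M'" unfolding M'_def by auto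
    next
      fix a b assume "a \<in> M'" "b \<in> M'"
      then obtain m n where a: "a \<in> S" "m \<in> M" "q a = q m" and b: "b \<in> S" "n \<in> M" "q b = q n"
        unfolding M'_def by auto
      have H: "a \<in> carrier H" "m \<in> carrier H" "b \<in> carrier H" "n \<in> carrier H"
        using a b SsubH MsubH by auto
      have "a \<otimes>\<^bsub>H\<^esub> b \<in> S" using subgroup.m_closed[OF S a(1) b(1)] .
      moreover have "q (a \<otimes>\<^bsub>H\<^esub> b) = q (m \<otimes>\<^bsub>H\<^esub> n)" using H a(3) b(3) by simp
      moreover have "m \<otimes>\<^bsub>H\<^esub> n \<in> M" using subgroup.m_closed[OF MH a(2) b(2)] .
      ultimately show "a \<otimes>\<^bsub>H\<^esub> b \<in> M'" unfolding M'_def by auto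
    qed
    have M'S: "subgroup M' (H\<lparr>carrier := S\<rparr>)"
      using H.subgroup_incl[OF M'H S] unfolding M'_def by auto
    have "M \<subseteq> M'" unfolding M'_def using MsubS by auto
    moreover have "k \<in> M'" unfolding M'_def using k subgroup.one_closed[OF MH] by force
    ultimately have "M' = S" using Mmx[OF M'S] kM by auto
    hence "\<forall>s\<in>S. q s \<in> q ` M" unfolding M'_def by blast
    hence "q ` S \<subseteq> q ` M" by blast
    hence "q ` M = carrier G" using qS MsubS by blast
    hence "card S \<le> card M" using min[OF MH] by simp
    moreover have "card M < card S"
      using MsubS MneS fin SsubH finite_subset by (intro psubset_card_mono) auto
    ultimately show False by simp
  qed
  thus "k \<in> frattini_subgroup (H\<lparr>carrier := S\<rparr>)" unfolding frattini_subgroup_def using k by auto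
qed




lemma exists_order_p:
  fixes G0 :: "('a, 'm) monoid_scheme"
  assumes pr: "Factorial_Ring.prime p" and gG: "group G0" and fin: "finite (carrier G0)"
    and dv: "p dvd order G0" and syl: "sylow_subgroup p G0 P0"
  shows "\<exists>g \<in> P0. g \<noteq> \<one>\<^bsub>G0\<^esub> \<and> g [^]\<^bsub>G0\<^esub> p = \<one>\<^bsub>G0\<^esub>"
proof -
  interpret G0: group G0 by fact
  have P0: "subgroup P0 G0" and cP: "card P0 = p ^ multiplicity p (order G0)"
    using syl unfolding sylow_subgroup_def by auto
  have p1: "p > 1" using pr prime_gt_1_nat by blast
  have o0: "order G0 \<noteq> 0" unfolding order_def using fin G0.one_closed by auto
  have nu: "\<not> is_unit p" using p1 by simp
  have "multiplicity p (order G0) > 0" using multiplicity_gt_zero_iff[OF o0 nu] dv by simp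
  hence "p \<le> card P0" unfolding cP
    by (metis One_nat_def Suc_leI p1 less_imp_le_nat power_increasing power_one_right zero_less_one)
  have "\<not> P0 \<subseteq> {\<one>\<^bsub>G0\<^esub>}"
  proof
    assume "P0 \<subseteq> {\<one>\<^bsub>G0\<^esub>}"
    hence "card P0 \<le> card {\<one>\<^bsub>G0\<^esub>}" by (intro card_mono) auto
    thus False using \<open>p \<le> card P0\<close> p1 by simp
  qed
  then obtain x where x: "x \<in> P0" "x \<noteq> \<one>\<^bsub>G0\<^esub>" by auto
  have xc: "x \<in> carrier G0" using x P0 subgroup.subset by blast
  have gP: "group (G0\<lparr>carrier := P0\<rparr>)" using G0.subgroup_imp_group[OF P0] .
  have "x [^]\<^bsub>G0\<lparr>carrier := P0\<rparr>\<^esub> order (G0\<lparr>carrier := P0\<rparr>) = \<one>\<^bsub>G0\<lparr>carrier := P0\<rparr>\<^esub>"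
    using group.pow_order_eq_1[OF gP] x by simp
  hence xk: "x [^]\<^bsub>G0\<^esub> (p ^ multiplicity p (order G0)) = \<one>\<^bsub>G0\<^esub>"
    using cP by (simp add: pow_restrict order_def)
  define j where "j = (LEAST j. x [^]\<^bsub>G0\<^esub> (p ^ j) = \<one>\<^bsub>G0\<^esub>)"
  have j: "x [^]\<^bsub>G0\<^esub> (p ^ j) = \<one>\<^bsub>G0\<^esub>" unfolding j_def using xk by (rule LeastI)
  have j0: "j \<noteq> 0"
  proof
    assume "j = 0"
    hence "x [^]\<^bsub>G0\<^esub> (1::nat) = \<one>\<^bsub>G0\<^esub>" using j by simp
    thus False using x xc by simp
  qed
  define g where "g = x [^]\<^bsub>G0\<^esub> (p ^ (j - 1))"
  have "g [^]\<^bsub>G0\<^esub> p = x [^]\<^bsub>G0\<^esub> (p ^ (j - 1) * p)" unfolding g_def using xc G0.nat_pow_pow by simp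
  also have "p ^ (j - 1) * p = p ^ j" using j0 by (metis Suc_diff_1 bot_nat_0.not_eq_extremum power_Suc2)
  finally have g1: "g [^]\<^bsub>G0\<^esub> p = \<one>\<^bsub>G0\<^esub>" using j by simp
  have g2: "g \<noteq> \<one>\<^bsub>G0\<^esub>"
  proof
    assume "g = \<one>\<^bsub>G0\<^esub>"
    hence "j \<le> j - 1" unfolding j_def g_def by (rule Least_le)
    thus False using j0 by simp
  qed
  have "g = x [^]\<^bsub>G0\<lparr>carrier := P0\<rparr>\<^esub> (p ^ (j - 1))" unfolding g_def by (simp add: pow_restrict)
  moreover have "x [^]\<^bsub>G0\<lparr>carrier := P0\<rparr>\<^esub> (p ^ (j - 1)) \<in> carrier (G0\<lparr>carrier := P0\<rparr>)"
    by (rule monoid.nat_pow_closed[OF group.is_monoid[OF gP]]) (simp add: x)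
  ultimately have "g \<in> P0" by simp
  thus ?thesis using g1 g2 by blast
qed




theorem lemma2p7:
  fixes p :: nat
    and G0 :: "('a, 'm) monoid_scheme"
    and G1 :: "('b, 'n) monoid_scheme"
    and phi :: "'b \<Rightarrow> 'a"
    and P0 :: "'a set"
  assumes "Factorial_Ring.prime p"
    and "group G0" and "finite (carrier G0)"
    and "centerless G0" and "p_perfect p G0"
    and "p dvd order G0"
    and "universal_elab_p_frattini_cover p G1 G0 phi"
    and "sylow_subgroup p G0 P0"
  shows "\<not> (\<exists>s \<in> hom (G0\<lparr>carrier := normalizer G0 P0\<rparr>) G1.
              \<forall>x \<in> normalizer G0 P0. phi (s x) = x)"
proof
  assume "\<exists>s \<in> hom (G0\<lparr>carrier := normalizer G0 P0\<rparr>) G1. \<forall>x \<in> normalizer G0 P0. phi (s x) = x"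
  then obtain s where s: "s \<in> hom (G0\<lparr>carrier := normalizer G0 P0\<rparr>) G1"
    and sphi: "\<forall>x \<in> normalizer G0 P0. phi (s x) = x" by blast
  interpret G0: group G0 by fact
  have cov: "elab_p_frattini_cover p G1 G0 phi"
    and U: "\<And>(H' :: nat monoid) f'. finite (carrier H') \<Longrightarrow> elab_p_frattini_cover p H' G0 f' \<Longrightarrow>
        (\<exists>h \<in> hom G1 H'. \<forall>x \<in> carrier G1. f' (h x) = phi x)"
    using assms(7) unfolding universal_elab_p_frattini_cover_def by auto
  have gG1: "group G1" using cov unfolding elab_p_frattini_cover_def frattini_cover_def by auto
  obtain g where g: "g \<in> P0" "g \<noteq> \<one>\<^bsub>G0\<^esub>" "g [^]\<^bsub>G0\<^esub> p = \<one>\<^bsub>G0\<^esub>"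
    using exists_order_p[OF assms(1,2,3,6,8)] by blast
  have P0sub: "subgroup P0 G0" using assms(8) unfolding sylow_subgroup_def by auto
  have "P0 \<subseteq> carrier (G0\<lparr>carrier := normalizer G0 P0\<rparr>)"
    using subgroup.subset[OF normal_imp_subgroup[OF G0.subgroup_in_normalizer[OF P0sub]]] .
  hence gN: "g \<in> normalizer G0 P0" using g by auto
  have gc: "g \<in> carrier G0" using g P0sub subgroup.subset by blast
  obtain E :: "(('a set \<Rightarrow> int) \<times> 'a) monoid" and \<pi> where
    gE: "group E" and finE: "finite (carrier E)" and \<pi>hom: "\<pi> \<in> hom E G0"
    and \<pi>surj: "\<pi> ` carrier E = carrier G0"
    and Ecomm: "\<forall>x\<in>carrier E. \<forall>y\<in>carrier E. \<pi> x = \<one>\<^bsub>G0\<^esub> \<longrightarrow> \<pi> y = \<one>\<^bsub>G0\<^esub> \<longrightarrow> x \<otimes>\<^bsub>E\<^esub> y = y \<otimes>\<^bsub>E\<^esub> x"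
    and Ep: "\<forall>x\<in>carrier E. \<pi> x = \<one>\<^bsub>G0\<^esub> \<longrightarrow> x [^]\<^bsub>E\<^esub> p = \<one>\<^bsub>E\<^esub>"
    and Elift: "\<forall>y\<in>carrier E. \<pi> y = g \<longrightarrow> y [^]\<^bsub>E\<^esub> p \<noteq> \<one>\<^bsub>E\<^esub>"
    using ext_exists[OF assms(2,3,1) gc g(2,3)] by blast
  obtain H :: "nat monoid" and f where gH: "group H" and fiso: "f \<in> iso H E"
    using nat_copy[OF gE finE] by blast
  interpret E: group E by fact
  interpret H: group H by fact
  have fhom: "f \<in> hom H E" and fbij: "bij_betw f (carrier H) (carrier E)"
    using fiso unfolding iso_def by auto
  have finj: "inj_on f (carrier H)" and fim: "f ` carrier H = carrier E" using fbij unfolding bij_betw_def by auto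
  have fc: "\<And>x. x \<in> carrier H \<Longrightarrow> f x \<in> carrier E" using fim by auto
  have fm: "\<And>x y. x \<in> carrier H \<Longrightarrow> y \<in> carrier H \<Longrightarrow> f (x \<otimes>\<^bsub>H\<^esub> y) = f x \<otimes>\<^bsub>E\<^esub> f y"
    using fhom unfolding hom_def by auto
  have f1: "f \<one>\<^bsub>H\<^esub> = \<one>\<^bsub>E\<^esub>" using hom_one[OF fhom gH gE] .
  have fpow: "\<And>x n. x \<in> carrier H \<Longrightarrow> f (x [^]\<^bsub>H\<^esub> (n::nat)) = f x [^]\<^bsub>E\<^esub> n"
    using hom_nat_pow[OF fhom _ gH gE] by blast
  have finH: "finite (carrier H)" using bij_betw_finite[OF fbij] finE by simp
  define q where "q = (\<lambda>x. \<pi> (f x))"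
  have \<pi>c: "\<And>x. x \<in> carrier E \<Longrightarrow> \<pi> x \<in> carrier G0" using \<pi>hom unfolding hom_def by auto
  have \<pi>m: "\<And>x y. x \<in> carrier E \<Longrightarrow> y \<in> carrier E \<Longrightarrow> \<pi> (x \<otimes>\<^bsub>E\<^esub> y) = \<pi> x \<otimes>\<^bsub>G0\<^esub> \<pi> y"
    using \<pi>hom unfolding hom_def by auto
  have qhom: "q \<in> hom H G0" unfolding hom_def q_def using fc \<pi>c fm \<pi>m by auto
  have qsurj: "q ` carrier H = carrier G0" unfolding q_def using fim \<pi>surj by (simp add: image_image[symmetric])
  have lift: "\<And>y. y \<in> carrier H \<Longrightarrow> q y = g \<Longrightarrow> y [^]\<^bsub>H\<^esub> p \<noteq> \<one>\<^bsub>H\<^esub>"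
  proof
    fix y assume y: "y \<in> carrier H" "q y = g" "y [^]\<^bsub>H\<^esub> p = \<one>\<^bsub>H\<^esub>"
    hence "f y [^]\<^bsub>E\<^esub> p = \<one>\<^bsub>E\<^esub>" using fpow[of y p] f1 by simp
    thus False using Elift fc[OF y(1)] y(2) unfolding q_def by blast
  qed
  have kcomm: "\<And>x y. x \<in> carrier H \<Longrightarrow> y \<in> carrier H \<Longrightarrow> q x = \<one>\<^bsub>G0\<^esub> \<Longrightarrow> q y = \<one>\<^bsub>G0\<^esub> \<Longrightarrow>
      x \<otimes>\<^bsub>H\<^esub> y = y \<otimes>\<^bsub>H\<^esub> x"
  proof -
    fix x y assume xy: "x \<in> carrier H" "y \<in> carrier H" "q x = \<one>\<^bsub>G0\<^esub>" "q y = \<one>\<^bsub>G0\<^esub>"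
    have "f (x \<otimes>\<^bsub>H\<^esub> y) = f (y \<otimes>\<^bsub>H\<^esub> x)"
      using fm xy Ecomm fc unfolding q_def by simp
    thus "x \<otimes>\<^bsub>H\<^esub> y = y \<otimes>\<^bsub>H\<^esub> x" using finj xy by (simp add: inj_on_eq_iff)
  qed
  have kp: "\<And>x. x \<in> carrier H \<Longrightarrow> q x = \<one>\<^bsub>G0\<^esub> \<Longrightarrow> x [^]\<^bsub>H\<^esub> p = \<one>\<^bsub>H\<^esub>"
  proof -
    fix x assume x: "x \<in> carrier H" "q x = \<one>\<^bsub>G0\<^esub>"
    have "f (x [^]\<^bsub>H\<^esub> p) = f \<one>\<^bsub>H\<^esub>" using fpow[OF x(1)] f1 Ep fc[OF x(1)] x(2) unfolding q_def by simp
    thus "x [^]\<^bsub>H\<^esub> p = \<one>\<^bsub>H\<^esub>" using finj x(1) by (simp add: inj_on_eq_iff)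
  qed
  obtain S where S: "subgroup S H \<and> q ` S = carrier G0"
    and Smin: "\<forall>T. subgroup T H \<and> q ` T = carrier G0 \<longrightarrow> card S \<le> card T"
    using ex_has_least_nat[of "\<lambda>T. subgroup T H \<and> q ` T = carrier G0" "carrier H" card]
      H.subgroup_self qsurj by blast
  define H' where "H' = H\<lparr>carrier := S\<rparr>"
  have SH: "S \<subseteq> carrier H" using S subgroup.subset by blast
  have gH': "group H'" unfolding H'_def using H.subgroup_imp_group S by blast
  have qH': "q \<in> hom H' G0" using qhom SH unfolding hom_def H'_def by auto
  have frat: "kernel H' G0 q \<subseteq> frattini_subgroup H'"
    unfolding H'_def using min_supp_frattini[OF gH assms(2) finH qhom] S Smin by blast
  have elab: "elab_p_frattini_cover p H' G0 q"
    unfolding elab_p_frattini_cover_def frattini_cover_def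
  proof (intro conjI)
    show "group H'" by fact
    show "group G0" by fact
    show "q \<in> epi H' G0" unfolding epi_def using qH' S unfolding H'_def by auto
    show "kernel H' G0 q \<subseteq> frattini_subgroup H'" by fact
    show "elementary_abelian_p p H' (kernel H' G0 q)"
      unfolding elementary_abelian_p_def kernel_def H'_def
      using kcomm kp SH by (auto simp: pow_restrict)
  qed
  have finH': "finite (carrier H')" unfolding H'_def using finH SH finite_subset by auto
  obtain h where h: "h \<in> hom G1 H'" and hq: "\<forall>x \<in> carrier G1. q (h x) = phi x"
    using U[OF finH' elab] by blast
  have NP: "subgroup (normalizer G0 P0) G0" using G0.normalizer_imp_subgroup P0sub subgroup.subset by blast
  have gNg: "group (G0\<lparr>carrier := normalizer G0 P0\<rparr>)" using G0.subgroup_imp_group[OF NP] .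
  have sg: "s g \<in> carrier G1" using s gN unfolding hom_def by auto
  have y: "h (s g) \<in> S" using h sg unfolding hom_def H'_def by auto
  have qy: "q (h (s g)) = g" using hq sg sphi gN by simp
  have "h (s g) [^]\<^bsub>H\<^esub> p = h (s g) [^]\<^bsub>H'\<^esub> p" unfolding H'_def by (simp add: pow_restrict)
  also have "\<dots> = h (s g [^]\<^bsub>G1\<^esub> p)" using hom_nat_pow[OF h sg gG1 gH'] by simp
  also have "s g [^]\<^bsub>G1\<^esub> p = s (g [^]\<^bsub>G0\<lparr>carrier := normalizer G0 P0\<rparr>\<^esub> p)"
    using hom_nat_pow[OF s _ gNg gG1, of g p] gN by simp
  also have "g [^]\<^bsub>G0\<lparr>carrier := normalizer G0 P0\<rparr>\<^esub> p = \<one>\<^bsub>G0\<lparr>carrier := normalizer G0 P0\<rparr>\<^esub>"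
    using g(3) by (simp add: pow_restrict)
  also have "s \<one>\<^bsub>G0\<lparr>carrier := normalizer G0 P0\<rparr>\<^esub> = \<one>\<^bsub>G1\<^esub>" using hom_one[OF s gNg gG1] .
  also have "h \<one>\<^bsub>G1\<^esub> = \<one>\<^bsub>H'\<^esub>" using hom_one[OF h gG1 gH'] .
  also have "\<one>\<^bsub>H'\<^esub> = \<one>\<^bsub>H\<^esub>" unfolding H'_def by simp
  finally show False using lift[of "h (s g)"] y SH qy by blast
qed


end
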